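(* Let $A$ be a non-empty set and $\theta\subseteq\mathbb{M}_A^2$ a congruence on the free magma $\mathbb{M}_A$. The following are equivalent: (1) $\mathbb{M}_A/\theta$ is equidecomposable; (2) $\theta$ is closed; (3) $\mathcal{G}(\theta)\subseteq (A\times\mathbb{M}_A)\cup(\mathbb{M}_A\times A)$.
   Context: $\mathbb{M}_A$ is the free magma on $A$ (non-associative words over $A$ with $x+y=(x,y)$). $\mathbb{M}_A^2$ has the componentwise operation. A congruence on a magma $M$ is an equivalence relation on $M$ that is a submagma of $M^2$. A magma is equidecomposable if $x+y=x'+y'$ implies $x=x'$ and $y=y'$. A subset $X$ of a magma is closed if $u+v\in X$ implies $u,v\in X$; here $\theta$ is closed as a subset of $\mathbb{M}_A^2$. For a submagma $S$ of $\mathbb{M}_A^2$, $\mathcal{G}(S)$ is the set of elements of $S$ that cannot be written as $u+v$ with $u,v\in S$ (its unique minimal generating set). *)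

theory Defs
  imports Main
begin

text \<open>Non-associative words over an alphabet; the free magma on A is the set of
  words all of whose letters lie in A, with operation x + y = Node x y.\<close>
datatype 'a word = Leaf 'a | Node "'a word" "'a word"

inductive_set free_magma :: "'a set \<Rightarrow> 'a word set" for A where
  leaf: "a \<in> A \<Longrightarrow> Leaf a \<in> free_magma A"
| node: "x \<in> free_magma A \<Longrightarrow> y \<in> free_magma A \<Longrightarrow> Node x y \<in> free_magma A"

definition pair_op :: "'a word \<times> 'a word \<Rightarrow> 'a word \<times> 'a word \<Rightarrow> 'a word \<times> 'a word" where
  "pair_op u v = (Node (fst u) (fst v), Node (snd u) (snd v))"

definition congruence :: "'a set \<Rightarrow> ('a word \<times> 'a word) set \<Rightarrow> bool" where
  "congruence A \<theta> \<longleftrightarrow> equiv (free_magma A) \<theta> \<and>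
     (\<forall>u\<in>\<theta>. \<forall>v\<in>\<theta>. pair_op u v \<in> \<theta>)"

definition quot_op :: "('a word \<times> 'a word) set \<Rightarrow> 'a word set \<Rightarrow> 'a word set \<Rightarrow> 'a word set" where
  "quot_op \<theta> X Y = \<theta> `` {Node (SOME x. x \<in> X) (SOME y. y \<in> Y)}"

definition equidecomposable :: "'m set \<Rightarrow> ('m \<Rightarrow> 'm \<Rightarrow> 'm) \<Rightarrow> bool" where
  "equidecomposable M f \<longleftrightarrow>
     (\<forall>x\<in>M. \<forall>y\<in>M. \<forall>x'\<in>M. \<forall>y'\<in>M. f x y = f x' y' \<longrightarrow> x = x' \<and> y = y')"

definition closed_set :: "'a set \<Rightarrow> ('a word \<times> 'a word) set \<Rightarrow> bool" where
  "closed_set A X \<longleftrightarrow> (\<forall>u\<in>free_magma A \<times> free_magma A. \<forall>v\<in>free_magma A \<times> free_magma A.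
     pair_op u v \<in> X \<longrightarrow> u \<in> X \<and> v \<in> X)"

definition gens :: "('a word \<times> 'a word) set \<Rightarrow> ('a word \<times> 'a word) set" where
  "gens S = {w \<in> S. \<not> (\<exists>u\<in>S. \<exists>v\<in>S. w = pair_op u v)}"

end

theory Submission
  imports Defs
begin

lemma fm_node_inv: "Node x y \<in> free_magma A \<Longrightarrow> x \<in> free_magma A \<and> y \<in> free_magma A"
  by (erule free_magma.cases) auto

lemma fm_leaf_inv: "Leaf a \<in> free_magma A \<Longrightarrow> a \<in> A"
  by (erule free_magma.cases) auto

lemma quot_op_class:
  assumes c: "congruence A \<theta>" and x: "x \<in> free_magma A" and y: "y \<in> free_magma A"
  shows "quot_op \<theta> (\<theta>``{x}) (\<theta>``{y}) = \<theta>``{Node x y}"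
proof -
  have eq: "equiv (free_magma A) \<theta>" and cl: "\<forall>u\<in>\<theta>. \<forall>v\<in>\<theta>. pair_op u v \<in> \<theta>"
    using c unfolding congruence_def by auto
  have xx: "x \<in> \<theta>``{x}" using eq x unfolding equiv_def refl_on_def by blast
  have yy: "y \<in> \<theta>``{y}" using eq y unfolding equiv_def refl_on_def by blast
  define x' where "x' = (SOME z. z \<in> \<theta>``{x})"
  define y' where "y' = (SOME z. z \<in> \<theta>``{y})"
  have "x' \<in> \<theta>``{x}" unfolding x'_def using xx by (rule someI)
  hence hx: "(x, x') \<in> \<theta>" by simp
  have "y' \<in> \<theta>``{y}" unfolding y'_def using yy by (rule someI)
  hence hy: "(y, y') \<in> \<theta>" by simp
  have "pair_op (x, x') (y, y') \<in> \<theta>" using cl hx hy by blast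
  hence "(Node x y, Node x' y') \<in> \<theta>" by (simp add: pair_op_def)
  hence "\<theta>``{Node x' y'} = \<theta>``{Node x y}" using eq by (metis equiv_class_eq)
  thus ?thesis unfolding quot_op_def x'_def y'_def .
qed

theorem theorem6p4:
  fixes A :: "'a set" and \<theta> :: "('a word \<times> 'a word) set"
  assumes "A \<noteq> {}"
    and "congruence A \<theta>"
  shows "(equidecomposable (free_magma A // \<theta>) (quot_op \<theta>) \<longleftrightarrow> closed_set A \<theta>)
       \<and> (closed_set A \<theta> \<longleftrightarrow>
            gens \<theta> \<subseteq> ((Leaf ` A) \<times> free_magma A) \<union> (free_magma A \<times> (Leaf ` A)))"
proof -
  have eq: "equiv (free_magma A) \<theta>" and cl: "\<forall>u\<in>\<theta>. \<forall>v\<in>\<theta>. pair_op u v \<in> \<theta>"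
    using assms(2) unfolding congruence_def by auto
  have sub: "\<theta> \<subseteq> free_magma A \<times> free_magma A" using eq unfolding equiv_def refl_on_def by blast
  let ?F = "free_magma A"
  have ceq: "\<And>a b. a \<in> ?F \<Longrightarrow> b \<in> ?F \<Longrightarrow> (\<theta>``{a} = \<theta>``{b}) = ((a,b) \<in> \<theta>)"
    using eq by (rule eq_equiv_class_iff)
  have E: "equidecomposable (?F // \<theta>) (quot_op \<theta>) \<longleftrightarrow>
     (\<forall>x\<in>?F. \<forall>y\<in>?F. \<forall>x'\<in>?F. \<forall>y'\<in>?F. (Node x y, Node x' y') \<in> \<theta> \<longrightarrow> (x,x') \<in> \<theta> \<and> (y,y') \<in> \<theta>)"
  proof
    assume h: "equidecomposable (?F // \<theta>) (quot_op \<theta>)"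
    show "\<forall>x\<in>?F. \<forall>y\<in>?F. \<forall>x'\<in>?F. \<forall>y'\<in>?F. (Node x y, Node x' y') \<in> \<theta> \<longrightarrow> (x,x') \<in> \<theta> \<and> (y,y') \<in> \<theta>"
    proof (intro ballI impI)
      fix x y x' y' assume F: "x \<in> ?F" "y \<in> ?F" "x' \<in> ?F" "y' \<in> ?F"
        and t: "(Node x y, Node x' y') \<in> \<theta>"
      have "quot_op \<theta> (\<theta>``{x}) (\<theta>``{y}) = quot_op \<theta> (\<theta>``{x'}) (\<theta>``{y'})"
        using quot_op_class[OF assms(2)] F ceq t free_magma.node by metis
      moreover have "\<theta>``{x} \<in> ?F // \<theta>" "\<theta>``{y} \<in> ?F // \<theta>"
        "\<theta>``{x'} \<in> ?F // \<theta>" "\<theta>``{y'} \<in> ?F // \<theta>"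
        using F by (auto intro: quotientI)
      ultimately have "\<theta>``{x} = \<theta>``{x'} \<and> \<theta>``{y} = \<theta>``{y'}"
        using h unfolding equidecomposable_def by blast
      thus "(x,x') \<in> \<theta> \<and> (y,y') \<in> \<theta>" using ceq F by blast
    qed
  next
    assume h: "\<forall>x\<in>?F. \<forall>y\<in>?F. \<forall>x'\<in>?F. \<forall>y'\<in>?F. (Node x y, Node x' y') \<in> \<theta> \<longrightarrow> (x,x') \<in> \<theta> \<and> (y,y') \<in> \<theta>"
    show "equidecomposable (?F // \<theta>) (quot_op \<theta>)"
      unfolding equidecomposable_def
    proof (intro ballI impI)
      fix X Y X' Y' assume "X \<in> ?F // \<theta>" "Y \<in> ?F // \<theta>" "X' \<in> ?F // \<theta>" "Y' \<in> ?F // \<theta>"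
        and e: "quot_op \<theta> X Y = quot_op \<theta> X' Y'"
      then obtain x y x' y' where F: "x \<in> ?F" "y \<in> ?F" "x' \<in> ?F" "y' \<in> ?F"
        and d: "X = \<theta>``{x}" "Y = \<theta>``{y}" "X' = \<theta>``{x'}" "Y' = \<theta>``{y'}"
        by (auto elim!: quotientE)
      have "\<theta>``{Node x y} = \<theta>``{Node x' y'}"
        using e d quot_op_class[OF assms(2)] F by metis
      hence "(Node x y, Node x' y') \<in> \<theta>" using ceq F free_magma.node by metis
      hence "(x,x') \<in> \<theta> \<and> (y,y') \<in> \<theta>" using h F by blast
      thus "X = X' \<and> Y = Y'" using d ceq F by blast
    qed
  qed
  have C: "closed_set A \<theta> \<longleftrightarrow>
     (\<forall>x\<in>?F. \<forall>y\<in>?F. \<forall>x'\<in>?F. \<forall>y'\<in>?F. (Node x y, Node x' y') \<in> \<theta> \<longrightarrow> (x,x') \<in> \<theta> \<and> (y,y') \<in> \<theta>)"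
    unfolding closed_set_def pair_op_def by auto
  have G: "closed_set A \<theta> \<longleftrightarrow> gens \<theta> \<subseteq> ((Leaf ` A) \<times> ?F) \<union> (?F \<times> (Leaf ` A))"
  proof
    assume h: "closed_set A \<theta>"
    show "gens \<theta> \<subseteq> ((Leaf ` A) \<times> ?F) \<union> (?F \<times> (Leaf ` A))"
    proof
      fix w assume w: "w \<in> gens \<theta>"
      obtain p q where pq: "w = (p, q)" by force
      have wt: "(p,q) \<in> \<theta>" and ng: "\<not> (\<exists>u\<in>\<theta>. \<exists>v\<in>\<theta>. (p,q) = pair_op u v)"
        using w pq unfolding gens_def by auto
      have pF: "p \<in> ?F" and qF: "q \<in> ?F" using wt sub by auto
      show "w \<in> ((Leaf ` A) \<times> ?F) \<union> (?F \<times> (Leaf ` A))"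
      proof (cases p)
        case (Leaf a)
        have "a \<in> A" using pF Leaf fm_leaf_inv[of a A] by simp
        hence "p \<in> Leaf ` A" using Leaf by simp
        then show ?thesis using pq qF by simp
      next
        case (Node a b)
        note pn = Node
        show ?thesis
        proof (cases q)
          case (Leaf c)
          have "c \<in> A" using qF Leaf fm_leaf_inv[of c A] by simp
          hence "q \<in> Leaf ` A" using Leaf by simp
          then show ?thesis using pq pF by simp
        next
          case (Node c d)
          have "a \<in> ?F" "b \<in> ?F" using pF pn fm_node_inv[of a b A] by simp_all
          moreover have "c \<in> ?F" "d \<in> ?F" using qF Node fm_node_inv[of c d A] by simp_all
          moreover have "(Node a b, Node c d) \<in> \<theta>" using wt pn Node by simp
          ultimately have "(a,c) \<in> \<theta> \<and> (b,d) \<in> \<theta>" using h unfolding C by blast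
          hence "(p,q) = pair_op (a,c) (b,d)" "(a,c) \<in> \<theta>" "(b,d) \<in> \<theta>" using pn Node by (simp_all add: pair_op_def)
          hence False using ng by blast
          thus ?thesis ..
        qed
      qed
    qed
  next
    assume h: "gens \<theta> \<subseteq> ((Leaf ` A) \<times> ?F) \<union> (?F \<times> (Leaf ` A))"
    show "closed_set A \<theta>"
      unfolding C
    proof (intro ballI impI)
      fix x y x' y' assume "x \<in> ?F" "y \<in> ?F" "x' \<in> ?F" "y' \<in> ?F"
        and t: "(Node x y, Node x' y') \<in> \<theta>"
      have "(Node x y, Node x' y') \<notin> gens \<theta>" using h by auto
      then obtain u v where "u \<in> \<theta>" "v \<in> \<theta>" "(Node x y, Node x' y') = pair_op u v"
        using t unfolding gens_def by auto
      thus "(x,x') \<in> \<theta> \<and> (y,y') \<in> \<theta>" by (cases u; cases v) (auto simp: pair_op_def)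
    qed
  qed
  show ?thesis using E C G by blast
qed

end
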